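(* Let $\mathcal{A}=\langle\Sigma,Q,q_0,\delta,\alpha\rangle$ be a nice GFG-tNCW and let $\mathcal{E}\subseteq Q\times\Sigma\times Q$ be an allowed set for $\mathcal{A}$. Let $q,s\in Q$, $\sigma\in\Sigma$, and let $\langle q,\sigma,q'\rangle\in\Delta$ be a transition of $\mathcal{A}$ and $\langle s,\sigma,s'\rangle\in\Delta_\mathcal{E}$ a transition of $\mathcal{A}_\mathcal{E}$. If $q\sim_\mathcal{A}s$, then $q'\sim_\mathcal{A}s'$.
   Context: A tNCW is $\mathcal{A}=\langle\Sigma,Q,q_0,\delta,\alpha\rangle$: finite alphabet $\Sigma$, finite state set $Q$, initial state $q_0$, transition function $\delta:Q\times\Sigma\to 2^Q\setminus\{\emptyset\}$ with transition relation $\Delta=\{\langle q,\sigma,s\rangle:s\in\delta(q,\sigma)\}$, and $\alpha\subseteq\Delta$. $\alpha$-transitions are those in $\alpha$, $\bar\alpha$-transitions those in $\Delta\setminus\alpha$; $\delta^{\bar\alpha}(q,\sigma)$ denotes the $\sigma$-successors via $\bar\alpha$-transitions. A run on $w=\sigma_1\sigma_2\cdots$ is $r_0r_1\cdots$ with $r_0=q_0$, $r_{i+1}\in\delta(r_i,\sigma_{i+1})$; accepting iff it traverses $\alpha$-transitions only finitely often; $L(\mathcal{A})$ the accepted language. $\mathcal{A}^q$ is $\mathcal{A}$ with initial state $q$; $q\sim_\mathcal{A}s$ iff $L(\mathcal{A}^q)=L(\mathcal{A}^s)$. GFG: there is $f:\Sigma^*\to Q$ with $f(\epsilon)=q_0$,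 $\langle f(u),\sigma,f(u\sigma)\rangle\in\Delta$ for all $u,\sigma$, and for each $w\in L(\mathcal{A})$ the run $f(w[1,0]),f(w[1,1]),\dots$ is accepting; $q$ is GFG if $\mathcal{A}^q$ is. Semantically deterministic: all $\sigma$-successors of a state pairwise $\sim$; safe deterministic: $|\delta^{\bar\alpha}(q,\sigma)|\le1$; normal: a $\bar\alpha$-path from $q$ to $s$ implies one from $s$ to $q$. Nice: all states reachable and GFG, normal, safe deterministic, semantically deterministic. A triple $\langle q,\sigma,s\rangle\in Q\times\Sigma\times Q$ is an allowed transition of $\mathcal{A}$ if there is $s''\in Q$ with $s\sim_\mathcal{A}s''$ and $\langle q,\sigma,s''\rangle\in\Delta$. A set $\mathcal{E}\subseteq Q\times\Sigma\times Q$ is an allowed set if all its triples are allowed transitions of $\mathcal{A}$. For such $\mathcal{E}$, $\mathcal{A}_\mathcal{E}=\langle\Sigma,Q,q_0,\delta_\mathcal{E},\alpha_\mathcal{E}\rangle$ is the tNCW with transition relation $\Delta_\mathcal{E}=\Delta\cup\mathcal{E}$ and $\alpha_\mathcal{E}=\alpha\cup\mathcal{E}$. *)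

theory Defs
  imports Main
begin

record ('s, 'a) tncw =
  alph   :: "'a set"
  states :: "'s set"
  init   :: 's
  trans  :: "'s \<Rightarrow> 'a \<Rightarrow> 's set"
  acc    :: "('s \<times> 'a \<times> 's) set"

definition Delta :: "('s, 'a) tncw \<Rightarrow> ('s \<times> 'a \<times> 's) set" where
  "Delta A = {(q, \<sigma>, s). q \<in> states A \<and> \<sigma> \<in> alph A \<and> s \<in> trans A q \<sigma>}"

definition wf_tncw :: "('s, 'a) tncw \<Rightarrow> bool" where
  "wf_tncw A \<longleftrightarrow> finite (alph A) \<and> finite (states A) \<and> init A \<in> states A
     \<and> (\<forall>q \<in> states A. \<forall>\<sigma> \<in> alph A. trans A q \<sigma> \<noteq> {} \<and> trans A q \<sigma> \<subseteq> states A)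
     \<and> acc A \<subseteq> Delta A"

text \<open>Infinite words are maps nat => letter; w i is the (i+1)-th letter.\<close>
definition is_word :: "('s, 'a) tncw \<Rightarrow> (nat \<Rightarrow> 'a) \<Rightarrow> bool" where
  "is_word A w \<longleftrightarrow> (\<forall>i. w i \<in> alph A)"

definition is_run :: "('s, 'a) tncw \<Rightarrow> 's \<Rightarrow> (nat \<Rightarrow> 'a) \<Rightarrow> (nat \<Rightarrow> 's) \<Rightarrow> bool" where
  "is_run A q w r \<longleftrightarrow> r 0 = q \<and> (\<forall>i. r (Suc i) \<in> trans A (r i) (w i))"

definition accepting_run :: "('s, 'a) tncw \<Rightarrow> (nat \<Rightarrow> 'a) \<Rightarrow> (nat \<Rightarrow> 's) \<Rightarrow> bool" where
  "accepting_run A w r \<longleftrightarrow> finite {i. (r i, w i, r (Suc i)) \<in> acc A}"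

definition lang :: "('s, 'a) tncw \<Rightarrow> 's \<Rightarrow> (nat \<Rightarrow> 'a) set" where
  "lang A q = {w. is_word A w \<and> (\<exists>r. is_run A q w r \<and> accepting_run A w r)}"

definition equiv_st :: "('s, 'a) tncw \<Rightarrow> 's \<Rightarrow> 's \<Rightarrow> bool" where
  "equiv_st A q s \<longleftrightarrow> lang A q = lang A s"

definition GFG_state :: "('s, 'a) tncw \<Rightarrow> 's \<Rightarrow> bool" where
  "GFG_state A q \<longleftrightarrow> (\<exists>f :: 'a list \<Rightarrow> 's. f [] = q
     \<and> (\<forall>u \<in> lists (alph A). \<forall>\<sigma> \<in> alph A. (f u, \<sigma>, f (u @ [\<sigma>])) \<in> Delta A)
     \<and> (\<forall>w \<in> lang A q. accepting_run A w (\<lambda>i. f (map w [0..<i]))))"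

definition GFG :: "('s, 'a) tncw \<Rightarrow> bool" where
  "GFG A \<longleftrightarrow> GFG_state A (init A)"

definition trans_nacc :: "('s, 'a) tncw \<Rightarrow> 's \<Rightarrow> 'a \<Rightarrow> 's set" where
  "trans_nacc A q \<sigma> = {s. (q, \<sigma>, s) \<in> Delta A - acc A}"

definition reachable :: "('s, 'a) tncw \<Rightarrow> 's set" where
  "reachable A = {s. (init A, s) \<in> {(q, s). \<exists>\<sigma>. (q, \<sigma>, s) \<in> Delta A}\<^sup>*}"

definition nacc_path :: "('s, 'a) tncw \<Rightarrow> 's \<Rightarrow> 's \<Rightarrow> bool" where
  "nacc_path A q s \<longleftrightarrow> (q, s) \<in> {(q, s). \<exists>\<sigma>. (q, \<sigma>, s) \<in> Delta A - acc A}\<^sup>*"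

definition safe_deterministic :: "('s, 'a) tncw \<Rightarrow> bool" where
  "safe_deterministic A \<longleftrightarrow>
     (\<forall>q \<in> states A. \<forall>\<sigma> \<in> alph A. card (trans_nacc A q \<sigma>) \<le> 1)"

definition normal :: "('s, 'a) tncw \<Rightarrow> bool" where
  "normal A \<longleftrightarrow> (\<forall>q \<in> states A. \<forall>s \<in> states A. nacc_path A q s \<longrightarrow> nacc_path A s q)"

definition semantically_deterministic :: "('s, 'a) tncw \<Rightarrow> bool" where
  "semantically_deterministic A \<longleftrightarrow> (\<forall>q \<in> states A. \<forall>\<sigma> \<in> alph A.
     \<forall>s1 \<in> trans A q \<sigma>. \<forall>s2 \<in> trans A q \<sigma>. equiv_st A s1 s2)"

definition nice :: "('s, 'a) tncw \<Rightarrow> bool" where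
  "nice A \<longleftrightarrow> states A \<subseteq> reachable A \<and> (\<forall>q \<in> states A. GFG_state A q)
     \<and> normal A \<and> safe_deterministic A \<and> semantically_deterministic A"

definition allowed_transition :: "('s, 'a) tncw \<Rightarrow> 's \<times> 'a \<times> 's \<Rightarrow> bool" where
  "allowed_transition A t \<longleftrightarrow> (case t of (q, \<sigma>, s) \<Rightarrow>
     \<exists>s'' \<in> states A. equiv_st A s s'' \<and> (q, \<sigma>, s'') \<in> Delta A)"

definition allowed_set :: "('s, 'a) tncw \<Rightarrow> ('s \<times> 'a \<times> 's) set \<Rightarrow> bool" where
  "allowed_set A E \<longleftrightarrow> E \<subseteq> states A \<times> alph A \<times> states A \<and> (\<forall>t \<in> E. allowed_transition A t)"

definition augment :: "('s, 'a) tncw \<Rightarrow> ('s \<times> 'a \<times> 's) set \<Rightarrow> ('s, 'a) tncw" where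
  "augment A E = A\<lparr> trans := (\<lambda>q \<sigma>. trans A q \<sigma> \<union> {s. (q, \<sigma>, s) \<in> E}),
                    acc := acc A \<union> E \<rparr>"

end

theory Submission
  imports Defs
begin

lemma residual:
  assumes wf: "wf_tncw A" and gfg: "\<forall>q \<in> states A. GFG_state A q"
    and sd: "semantically_deterministic A"
    and q: "q \<in> states A" and sg: "\<sigma> \<in> alph A" and q': "q' \<in> trans A q \<sigma>"
  shows "lang A q' = {w. case_nat \<sigma> w \<in> lang A q}"
proof (intro set_eqI iffI)
  fix w assume "w \<in> lang A q'"
  then obtain r where w: "is_word A w" and r: "is_run A q' w r" and acc: "accepting_run A w r"
    unfolding lang_def by blast
  let ?w = "case_nat \<sigma> w" and ?r = "case_nat q r"
  have "is_word A ?w" using w sg unfolding is_word_def by (simp split: nat.split)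
  moreover have "is_run A q ?w ?r" using r q' unfolding is_run_def
    by (auto split: nat.split)
  moreover have "accepting_run A ?w ?r"
  proof -
    have "{i. (?r i, ?w i, ?r (Suc i)) \<in> acc A} \<subseteq> {0} \<union> Suc ` {i. (r i, w i, r (Suc i)) \<in> acc A}"
    proof
      fix i assume "i \<in> {i. (?r i, ?w i, ?r (Suc i)) \<in> acc A}"
      thus "i \<in> {0} \<union> Suc ` {i. (r i, w i, r (Suc i)) \<in> acc A}"
        by (cases i) auto
    qed
    thus ?thesis using acc unfolding accepting_run_def by (simp add: finite_subset)
  qed
  ultimately show "w \<in> {w. case_nat \<sigma> w \<in> lang A q}" unfolding lang_def by blast
next
  fix w assume "w \<in> {w. case_nat \<sigma> w \<in> lang A q}"
  hence wl: "case_nat \<sigma> w \<in> lang A q" by simp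
  let ?w = "case_nat \<sigma> w"
  have ww: "is_word A ?w" using wl unfolding lang_def by blast
  hence w: "is_word A w" unfolding is_word_def by (metis nat.simps(5))
  obtain f where f0: "f [] = q" and fD: "\<forall>u \<in> lists (alph A). \<forall>\<sigma> \<in> alph A. (f u, \<sigma>, f (u @ [\<sigma>])) \<in> Delta A"
    and fa: "\<forall>w \<in> lang A q. accepting_run A w (\<lambda>i. f (map w [0..<i]))"
    using gfg q unfolding GFG_state_def by blast
  define \<rho> where "\<rho> i = f (map ?w [0..<i])" for i
  have accr: "accepting_run A ?w \<rho>" using fa wl unfolding \<rho>_def by simp
  define r where "r i = \<rho> (Suc i)" for i
  have r0: "r 0 = f [\<sigma>]" unfolding r_def \<rho>_def by simp
  have "(f [], \<sigma>, f ([] @ [\<sigma>])) \<in> Delta A" using fD sg by blast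
  hence fs: "f [\<sigma>] \<in> trans A q \<sigma>" using f0 unfolding Delta_def by simp
  have lists: "map ?w [0..<i] \<in> lists (alph A)" for i using ww unfolding is_word_def by auto
  have "is_run A (f [\<sigma>]) w r" unfolding is_run_def
  proof (intro conjI allI)
    show "r 0 = f [\<sigma>]" by (rule r0)
    fix i
    have "(f (map ?w [0..<Suc i]), ?w (Suc i), f (map ?w [0..<Suc i] @ [?w (Suc i)])) \<in> Delta A"
      using fD lists ww unfolding is_word_def by blast
    hence "(r i, w i, r (Suc i)) \<in> Delta A" unfolding r_def \<rho>_def by simp
    thus "r (Suc i) \<in> trans A (r i) (w i)" unfolding Delta_def by simp
  qed
  moreover have "accepting_run A w r"
  proof -
    have "{i. (r i, w i, r (Suc i)) \<in> acc A} = Suc -` {i. (\<rho> i, ?w i, \<rho> (Suc i)) \<in> acc A}"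
      unfolding r_def by auto
    moreover have "finite (Suc -` {i. (\<rho> i, ?w i, \<rho> (Suc i)) \<in> acc A})"
      using accr unfolding accepting_run_def by (intro finite_vimageI) auto
    ultimately show ?thesis unfolding accepting_run_def by simp
  qed
  ultimately have "w \<in> lang A (f [\<sigma>])" using w unfolding lang_def by blast
  moreover have "equiv_st A (f [\<sigma>]) q'" using sd q sg fs q' unfolding semantically_deterministic_def by blast
  ultimately show "w \<in> lang A q'" unfolding equiv_st_def by simp
qed

theorem mainTheorem7:
  fixes A :: "('s, 'a) tncw" and E :: "('s \<times> 'a \<times> 's) set"
  assumes "wf_tncw A" and "nice A" and "GFG A"
    and "allowed_set A E"
    and "q \<in> states A" and "s \<in> states A" and "\<sigma> \<in> alph A"
    and "(q, \<sigma>, q') \<in> Delta A"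
    and "(s, \<sigma>, s') \<in> Delta (augment A E)"
    and "equiv_st A q s"
  shows "equiv_st A q' s'"
proof -
  have gfg: "\<forall>q \<in> states A. GFG_state A q" and sd: "semantically_deterministic A"
    using assms(2) unfolding nice_def by auto
  have q': "q' \<in> trans A q \<sigma>" using assms(8) unfolding Delta_def by simp
  have L: "lang A q = lang A s" using assms(10) unfolding equiv_st_def .
  have res: "lang A x = {w. case_nat \<sigma> w \<in> lang A s}" if "x \<in> trans A s \<sigma>" for x
    using residual[OF assms(1) gfg sd assms(6) assms(7) that] .
  have Lq': "lang A q' = {w. case_nat \<sigma> w \<in> lang A s}"
    using residual[OF assms(1) gfg sd assms(5) assms(7) q'] L by simp
  have "s' \<in> trans A s \<sigma> \<or> (s, \<sigma>, s') \<in> E"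
    using assms(9) unfolding Delta_def augment_def by auto
  thus ?thesis
  proof
    assume "s' \<in> trans A s \<sigma>" thus ?thesis using res Lq' unfolding equiv_st_def by simp
  next
    assume "(s, \<sigma>, s') \<in> E"
    then obtain s'' where "equiv_st A s' s''" "(s, \<sigma>, s'') \<in> Delta A"
      using assms(4) unfolding allowed_set_def allowed_transition_def by fastforce
    thus ?thesis using res[of s''] Lq' unfolding equiv_st_def Delta_def by simp
  qed
qed

end
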